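(* Let $k \geq 1$, let $r > 0$, $\gamma' \geq 0$, $\gamma \geq 12 k$, let $T \in \mathbb{N}$, and let $K_1, \dots, K_T$ be convex subsets of $\mathbb{R}^d$. Let $V \subset \mathbb{R}^d$ be a linear subspace of dimension $d-k$. Consider the cylinder $C = \{y \in \mathbb{R}^d : \|P_V y\| \leq \gamma' r\}$ and let \[ \tilde{\Omega} = \Big\{ y \in C \;:\; \exists (y_t)_{t \in \{1,\dots,T\}} \text{ with } y_T = y,\ y_t \in K_t \cap C \text{ for all } t, \text{ and } \sum_{t=1}^{T-1} \|y_t - y_{t+1}\| \leq r \Big\}. \] Assume that $\mathbb{S} := \{\theta \in V^{\perp} : \|\theta\| = \gamma r\} \subset P_{V^{\perp}} \tilde{\Omega}$. Then there exists a sequence $(Y_t)_{t \in \{1,\dots,T\}}$ with $Y_t \in K_t \cap V$ for all $t$ and \[ \sum_{t=1}^{T-1} \|Y_t - Y_{t+1}\| \leq \left(1 + \frac{2 + 4\gamma'}{\gamma}\, k\right) r. \]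
   Context: $\|\cdot\|$ is the Euclidean norm on $\mathbb{R}^d$, $V^{\perp}$ is the orthogonal complement of $V$, and $P_W$ denotes the orthogonal projection onto a subspace $W$. *)

theory Defs
  imports "HOL-Analysis.Analysis"
begin

definition orth_proj :: "'a::euclidean_space set \<Rightarrow> 'a \<Rightarrow> 'a" where
  "orth_proj W y = (THE p. p \<in> W \<and> y - p \<in> orthogonal_comp W)"

end

theory Submission
  imports Defs
begin


lemma op_exists:
  fixes S :: "'a::euclidean_space set"
  assumes "subspace S"
  shows "\<exists>p. p \<in> S \<and> y - p \<in> orthogonal_comp S"
proof -
  obtain a z where a: "a \<in> span S" and z: "\<And>w. w \<in> span S \<Longrightarrow> orthogonal z w" and y: "y = a + z"
    using orthogonal_subspace_decomp_exists[of S y] by blast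
  have sp: "span S = S" using assms by (simp add: span_eq_iff)
  have "z \<in> orthogonal_comp S"
    unfolding orthogonal_comp_def
  proof (intro CollectI ballI)
    fix w assume "w \<in> S"
    then have "orthogonal z w" using z sp by blast
    then show "orthogonal w z" by (simp add: orthogonal_commute)
  qed
  moreover have "y - a = z" using y by simp
  ultimately show ?thesis using a sp by blast
qed

lemma op_uniq:
  fixes S :: "'a::euclidean_space set"
  assumes "subspace S" "p \<in> S" "y - p \<in> orthogonal_comp S" "q \<in> S" "y - q \<in> orthogonal_comp S"
  shows "p = q"
proof -
  have 1: "p - q \<in> S" using subspace_diff[OF assms(1) assms(2) assms(4)] .
  have e: "(y - q) - (y - p) = p - q" by (simp add: algebra_simps)
  have 2: "p - q \<in> orthogonal_comp S"
    using subspace_diff[OF subspace_orthogonal_comp assms(5) assms(3)] unfolding e .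
  have "p - q \<in> S \<inter> orthogonal_comp S" using 1 2 by (rule IntI)
  then have "p - q = 0" using orthogonal_Int_0[OF assms(1)] by blast
  then show ?thesis by simp
qed

lemma op_props:
  fixes S :: "'a::euclidean_space set"
  assumes "subspace S"
  shows "orth_proj S y \<in> S \<and> y - orth_proj S y \<in> orthogonal_comp S"
proof -
  obtain p where p: "p \<in> S \<and> y - p \<in> orthogonal_comp S" using op_exists[OF assms] by blast
  have "\<exists>!p. p \<in> S \<and> y - p \<in> orthogonal_comp S"
    using p op_uniq[OF assms] by blast
  then show ?thesis unfolding orth_proj_def by (rule theI')
qed

lemma op_eq:
  fixes S :: "'a::euclidean_space set"
  assumes "subspace S" "p \<in> S" "y - p \<in> orthogonal_comp S"
  shows "orth_proj S y = p"
  using op_uniq[OF assms(1) _ _ assms(2,3)] op_props[OF assms(1)] by blast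

lemma op_linear:
  fixes S :: "'a::euclidean_space set"
  assumes "subspace S"
  shows "linear (orth_proj S)"
proof (rule linearI)
  fix x y
  show "orth_proj S (x + y) = orth_proj S x + orth_proj S y"
  proof (rule op_eq[OF assms])
    show "orth_proj S x + orth_proj S y \<in> S"
      using op_props[OF assms] by (simp add: assms subspace_add)
    have "x + y - (orth_proj S x + orth_proj S y) = (x - orth_proj S x) + (y - orth_proj S y)" by simp
    then show "x + y - (orth_proj S x + orth_proj S y) \<in> orthogonal_comp S"
      using op_props[OF assms] subspace_add[OF subspace_orthogonal_comp] by metis
  qed
next
  fix c :: real and x
  show "orth_proj S (c *\<^sub>R x) = c *\<^sub>R orth_proj S x"
  proof (rule op_eq[OF assms])
    show "c *\<^sub>R orth_proj S x \<in> S"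
      using op_props[OF assms] by (simp add: assms subspace_scale)
    have "c *\<^sub>R x - c *\<^sub>R orth_proj S x = c *\<^sub>R (x - orth_proj S x)" by (simp add: algebra_simps)
    then show "c *\<^sub>R x - c *\<^sub>R orth_proj S x \<in> orthogonal_comp S"
      using op_props[OF assms] subspace_scale[OF subspace_orthogonal_comp] by metis
  qed
qed

lemma op_norm:
  fixes S :: "'a::euclidean_space set"
  assumes "subspace S"
  shows "norm (orth_proj S y) \<le> norm y"
proof -
  let ?p = "orth_proj S y"
  have "?p \<bullet> (y - ?p) = 0" using op_props[OF assms, of y]
    by (auto simp: orthogonal_comp_def orthogonal_def)
  then have "norm (?p + (y - ?p))^2 = norm ?p ^2 + norm (y - ?p)^2"
    using norm_add_Pythagorean orthogonal_def by blast
  then have "norm ?p ^2 \<le> norm y ^2" by simp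
  then show ?thesis using power2_le_imp_le[OF _ norm_ge_zero] by blast
qed

lemma op_id:
  fixes S :: "'a::euclidean_space set"
  assumes "subspace S" "x \<in> S"
  shows "orth_proj S x = x"
  using op_eq[OF assms(1,2)] by (simp add: subspace_0[OF subspace_orthogonal_comp])

lemma op_comp:
  fixes V :: "'a::euclidean_space set"
  assumes "subspace V"
  shows "orth_proj (orthogonal_comp V) y = y - orth_proj V y"
proof (rule op_eq[OF subspace_orthogonal_comp])
  show "y - orth_proj V y \<in> orthogonal_comp V" using op_props[OF assms] by blast
  show "y - (y - orth_proj V y) \<in> orthogonal_comp (orthogonal_comp V)"
    using op_props[OF assms] orthogonal_comp_self[OF assms] by simp
qed

lemma onb_expand:
  fixes B :: "'a::euclidean_space set"
  assumes "finite B" "pairwise orthogonal B" "\<And>e. e \<in> B \<Longrightarrow> norm e = 1" "n \<in> span B"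
  shows "(\<Sum>e\<in>B. (n \<bullet> e) *\<^sub>R e) = n"
proof -
  let ?u = "n - (\<Sum>e\<in>B. (n \<bullet> e) *\<^sub>R e)"
  have *: "\<forall>x\<in>B. \<forall>y\<in>B. x \<bullet> y = (if x=y then 1 else 0)"
    using assms(2,3) norm_eq_1 by (auto simp: orthogonal_def pairwise_def)
  have "b \<bullet> ?u = 0" if "b \<in> B" for b
  proof -
    have "b \<bullet> (\<Sum>e\<in>B. (n \<bullet> e) *\<^sub>R e) = (\<Sum>e\<in>B. (n \<bullet> e) * (b \<bullet> e))"
      by (simp add: inner_sum_right)
    also have "\<dots> = (\<Sum>e\<in>B. if e = b then n \<bullet> b else 0)"
      by (rule sum.cong) (use * that in auto)
    also have "\<dots> = n \<bullet> b" using that assms(1) by simp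
    finally show ?thesis by (simp add: inner_diff_right inner_commute)
  qed
  then have "\<forall>w\<in>span B. w \<bullet> ?u = 0"
    by (metis (no_types, lifting) inner_commute orthogonal_def orthogonal_to_span)
  moreover have "?u \<in> span B"
    using assms(4) by (simp add: span_diff span_sum span_mul span_base)
  ultimately have "?u \<bullet> ?u = 0" by blast
  then show ?thesis by simp
qed

lemma tele_bound:
  fixes f :: "'a::real_normed_vector \<Rightarrow> 'b::real_normed_vector" and ys :: "nat \<Rightarrow> 'a"
  assumes "linear f" "\<And>x. norm (f x) \<le> norm x" "t \<in> {1..T}"
  shows "norm (f (ys t) - f (ys T)) \<le> (\<Sum>u=1..T-1. norm (ys u - ys (u+1)))"
proof -
  have tT: "t \<le> T" "1 \<le> t" using assms(3) by auto
  have "f (ys t) - f (ys T) = (\<Sum>u=t..<T. (\<lambda>i. - f (ys i)) (Suc u) - (\<lambda>i. - f (ys i)) u)"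
    using sum_Suc_diff'[OF tT(1), of "\<lambda>i. - f (ys i)"] by simp
  also have "\<dots> = (\<Sum>u=t..<T. f (ys u - ys (Suc u)))"
    by (rule sum.cong) (simp_all add: linear_diff[OF assms(1)])
  finally have "norm (f (ys t) - f (ys T)) \<le> (\<Sum>u=t..<T. norm (f (ys u - ys (Suc u))))"
    by (simp add: norm_sum)
  also have "\<dots> \<le> (\<Sum>u=t..<T. norm (ys u - ys (Suc u)))"
    by (rule sum_mono) (rule assms(2))
  also have "\<dots> = (\<Sum>u=t..<T. norm (ys u - ys (u+1)))" by simp
  also have "\<dots> \<le> (\<Sum>u=1..T-1. norm (ys u - ys (u+1)))"
    by (rule sum_mono2) (use tT in auto)
  finally show ?thesis .
qed

lemma fp_solve:
  fixes W :: "'a::euclidean_space set"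
  assumes "subspace W" "finite B" "B \<subseteq> W" "\<And>e. e\<in>B \<Longrightarrow> norm e = 1"
    "\<And>e. e\<in>B \<Longrightarrow> g e \<in> W" "\<And>e. e\<in>B \<Longrightarrow> norm (g e) \<le> 2*r" "c \<in> W"
    "r > 0" "\<rho> = \<gamma> * r" "real (card B) < \<gamma>"
  shows "\<exists>n\<in>W. (2*\<rho>) *\<^sub>R n + (\<Sum>e\<in>B. (n \<bullet> e) *\<^sub>R g e) + c = 0"
proof -
  define F where "F n = - (1/(2*\<rho>)) *\<^sub>R (c + (\<Sum>e\<in>B. (n \<bullet> e) *\<^sub>R g e))" for n
  have gpos: "\<gamma> > 0" using assms(10) by (smt (verit) of_nat_0_le_iff)
  have rpos: "\<rho> > 0" using gpos assms(8,9) by simp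
  have "\<exists>!n\<in>W. F n = n"
  proof (rule Banach_fix)
    show "complete W" using closed_subspace[OF assms(1)] complete_eq_closed by blast
    show "W \<noteq> {}" using subspace_0[OF assms(1)] by blast
    show "0 \<le> real (card B) / \<gamma>" using gpos by simp
    show "real (card B) / \<gamma> < 1" using gpos assms(10) by simp
    show "F ` W \<subseteq> W"
    proof
      fix y assume "y \<in> F ` W"
      then obtain x where "y = F x" by blast
      have "(\<Sum>e\<in>B. (x \<bullet> e) *\<^sub>R g e) \<in> W"
        by (rule subspace_sum[OF assms(1)]) (simp add: assms(1,5) subspace_scale)
      then show "y \<in> W" unfolding \<open>y = F x\<close> F_def
        by (simp add: assms(1,7) subspace_add subspace_scale subspace_neg)
    qed
    fix x y assume "x \<in> W" "y \<in> W"
    have "F x - F y = - (1/(2*\<rho>)) *\<^sub>R (\<Sum>e\<in>B. ((x - y) \<bullet> e) *\<^sub>R g e)"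
      by (simp add: F_def algebra_simps inner_diff_left sum_subtractf scaleR_diff_left)
    then have "norm (F x - F y) = (1/(2*\<rho>)) * norm (\<Sum>e\<in>B. ((x - y) \<bullet> e) *\<^sub>R g e)"
      using rpos by simp
    also have "\<dots> \<le> (1/(2*\<rho>)) * (\<Sum>e\<in>B. norm (x - y) * (2*r))"
    proof (rule mult_left_mono)
      have "norm (\<Sum>e\<in>B. ((x - y) \<bullet> e) *\<^sub>R g e) \<le> (\<Sum>e\<in>B. norm (((x - y) \<bullet> e) *\<^sub>R g e))"
        by (rule norm_sum)
      also have "\<dots> \<le> (\<Sum>e\<in>B. norm (x - y) * (2*r))"
      proof (rule sum_mono)
        fix e assume e: "e \<in> B"
        have "\<bar>(x - y) \<bullet> e\<bar> \<le> norm (x - y)"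
          using Cauchy_Schwarz_ineq2[of "x - y" e] assms(4)[OF e] by simp
        then show "norm (((x - y) \<bullet> e) *\<^sub>R g e) \<le> norm (x - y) * (2*r)"
          using assms(6)[OF e] by (simp add: mult_mono')
      qed
      finally show "norm (\<Sum>e\<in>B. ((x - y) \<bullet> e) *\<^sub>R g e) \<le> (\<Sum>e\<in>B. norm (x - y) * (2*r))" .
    qed (use rpos in simp)
    also have "\<dots> = real (card B) / \<gamma> * norm (x - y)"
      using assms(8,9) gpos by (simp add: field_simps)
    finally show "dist (F x) (F y) \<le> real (card B) / \<gamma> * dist x y"
      by (simp add: dist_norm)
  qed
  then obtain n where n: "n \<in> W" "F n = n" by blast
  then have "(2*\<rho>) *\<^sub>R n = (2*\<rho>) *\<^sub>R F n" by simp
  also have "\<dots> = - (c + (\<Sum>e\<in>B. (n \<bullet> e) *\<^sub>R g e))"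
    using rpos by (simp add: F_def)
  finally show ?thesis using n(1) by (intro bexI[of _ n]) (simp_all add: algebra_simps)
qed



lemma sum_coef_bound:
  fixes B :: "'a::euclidean_space set"
  assumes "finite B" "\<And>e. e\<in>B \<Longrightarrow> norm e = 1" "\<And>e. e\<in>B \<Longrightarrow> norm (h e) \<le> M"
  shows "norm (\<Sum>e\<in>B. (x \<bullet> e) *\<^sub>R h e) \<le> real (card B) * norm x * M"
proof -
  have "norm (\<Sum>e\<in>B. (x \<bullet> e) *\<^sub>R h e) \<le> (\<Sum>e\<in>B. norm ((x \<bullet> e) *\<^sub>R h e))"
    by (rule norm_sum)
  also have "\<dots> \<le> (\<Sum>e\<in>B. norm x * M)"
  proof (rule sum_mono)
    fix e assume e: "e \<in> B"
    have "\<bar>x \<bullet> e\<bar> \<le> norm x"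
      using Cauchy_Schwarz_ineq2[of x e] assms(2)[OF e] by simp
    then show "norm ((x \<bullet> e) *\<^sub>R h e) \<le> norm x * M"
      using assms(3)[OF e] by (simp add: mult_mono')
  qed
  finally show ?thesis by simp
qed

theorem lemma9:
  fixes k T :: nat and r \<gamma> \<gamma>' :: real
    and K :: "nat \<Rightarrow> 'a::euclidean_space set" and V :: "'a set"
  assumes "k \<ge> 1" and "k \<le> DIM('a)"
    and "r > 0" and "\<gamma>' \<ge> 0" and "\<gamma> \<ge> 12 * real k"
    and "\<And>t. t \<in> {1..T} \<Longrightarrow> convex (K t)"
    and "subspace V" and "dim V = DIM('a) - k"
    and "{\<theta> \<in> orthogonal_comp V. norm \<theta> = \<gamma> * r} \<subseteq>
         orth_proj (orthogonal_comp V) `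
           {y \<in> {z. norm (orth_proj V z) \<le> \<gamma>' * r}.
              \<exists>ys :: nat \<Rightarrow> 'a. ys T = y
                 \<and> (\<forall>t\<in>{1..T}. ys t \<in> K t \<inter> {z. norm (orth_proj V z) \<le> \<gamma>' * r})
                 \<and> (\<Sum>t=1..T-1. norm (ys t - ys (t+1))) \<le> r}"
  shows "\<exists>Y :: nat \<Rightarrow> 'a. (\<forall>t\<in>{1..T}. Y t \<in> K t \<inter> V)
           \<and> (\<Sum>t=1..T-1. norm (Y t - Y (t+1))) \<le> (1 + (2 + 4 * \<gamma>') / \<gamma> * real k) * r"
proof -
  have kpos: "real k \<ge> 1" using assms(1) by simp
  have gpos: "\<gamma> > 0" using assms(5) kpos by linarith
  have bound_pos: "(1 + (2 + 4 * \<gamma>') / \<gamma> * real k) * r \<ge> 0"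
    using gpos assms(3,4) by (simp add: zero_le_mult_iff)
  show ?thesis
  proof (cases "T = 0")
    case True
    then show ?thesis using bound_pos by (intro exI[of _ "\<lambda>_. 0"]) simp
  next
    case False
    then have T1: "T \<ge> 1" by simp
    define W where "W = orthogonal_comp V"
    define P where "P = orth_proj V"
    define Q where "Q = orth_proj W"
    define \<rho> where "\<rho> = \<gamma> * r"
    have rho_pos: "\<rho> > 0" using gpos assms(3) by (simp add: \<rho>_def)
    have sV: "subspace V" by (rule assms(7))
    have sW: "subspace W" unfolding W_def by (rule subspace_orthogonal_comp)
    have linP: "linear P" unfolding P_def by (rule op_linear[OF sV])
    have linQ: "linear Q" unfolding Q_def by (rule op_linear[OF sW])
    have nP: "\<And>x. norm (P x) \<le> norm x" unfolding P_def by (rule op_norm[OF sV])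
    have nQ: "\<And>x. norm (Q x) \<le> norm x" unfolding Q_def by (rule op_norm[OF sW])
    have QP: "\<And>x. Q x = x - P x" unfolding Q_def P_def W_def by (rule op_comp[OF sV])
    have PV: "\<And>x. P x \<in> V" unfolding P_def using op_props[OF sV] by blast
    have QW: "\<And>x. Q x \<in> W" unfolding Q_def using op_props[OF sW] by blast
    have Pid: "\<And>x. x \<in> V \<Longrightarrow> P x = x" unfolding P_def by (rule op_id[OF sV])
    have inV: "\<And>x. Q x = 0 \<Longrightarrow> x \<in> V"
    proof -
      fix x assume "Q x = 0"
      then have "x = P x" using QP[of x] by simp
      then show "x \<in> V" using PV[of x] by simp
    qed
    have dimW: "dim W = k"
    proof -
      have "{y \<in> UNIV. \<forall>x \<in> V. orthogonal x y} = W"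
        unfolding W_def orthogonal_comp_def by auto
      then have "dim W + dim V = dim (UNIV :: 'a set)"
        using dim_subspace_orthogonal_to_vectors[OF sV subspace_UNIV] by simp
      then show ?thesis using assms(2,8) by simp
    qed
    obtain B where BW: "B \<subseteq> W" and Borth: "pairwise orthogonal B"
      and Bnorm: "\<And>x. x \<in> B \<Longrightarrow> norm x = 1" and Bind: "independent B"
      and Bcard: "card B = dim W" and Bspan: "span B = W"
      using orthonormal_basis_subspace[OF sW] by metis
    have Bfin: "finite B" using Bind by (simp add: indep_card_eq_dim_span)
    have cardB: "card B = k" using Bcard dimW by simp
    define N where "N = real k"
    have Npos: "N \<ge> 1" using kpos by (simp add: N_def)
    have cardBN: "real (card B) = N" using cardB by (simp add: N_def)
    have gN: "\<gamma> \<ge> 12 * N" using assms(5) by (simp add: N_def)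
    have cardlt: "real (card B) < \<gamma>" using cardBN gN Npos by linarith
    define Pr where "Pr \<theta> ys \<longleftrightarrow> Q (ys T) = \<theta> \<and> (\<forall>t\<in>{1..T}. ys t \<in> K t \<and> norm (P (ys t)) \<le> \<gamma>' * r)
        \<and> (\<Sum>t=1..T-1. norm (ys t - ys (t+1))) \<le> r" for \<theta> and ys :: "nat \<Rightarrow> 'a"
    have H: "\<exists>ys. Pr \<theta> ys" if "\<theta> \<in> W" "norm \<theta> = \<rho>" for \<theta>
    proof -
      have "\<theta> \<in> {\<theta> \<in> orthogonal_comp V. norm \<theta> = \<gamma> * r}" using that by (simp add: W_def \<rho>_def)
      then have "\<theta> \<in> orth_proj (orthogonal_comp V) `
           {y \<in> {z. norm (orth_proj V z) \<le> \<gamma>' * r}.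
              \<exists>ys :: nat \<Rightarrow> 'a. ys T = y
                 \<and> (\<forall>t\<in>{1..T}. ys t \<in> K t \<inter> {z. norm (orth_proj V z) \<le> \<gamma>' * r})
                 \<and> (\<Sum>t=1..T-1. norm (ys t - ys (t+1))) \<le> r}" using assms(9) by blast
      then obtain y ys where "\<theta> = Q y" "ys T = y"
                 "\<forall>t\<in>{1..T}. ys t \<in> K t \<inter> {z. norm (P z) \<le> \<gamma>' * r}"
                 "(\<Sum>t=1..T-1. norm (ys t - ys (t+1))) \<le> r"
        unfolding Q_def P_def W_def by blast
      then show ?thesis unfolding Pr_def by (intro exI[of _ ys]) auto
    qed
    define pp where "pp e = (SOME ys. Pr (\<rho> *\<^sub>R e) ys)" for e
    define pm where "pm e = (SOME ys. Pr (- (\<rho> *\<^sub>R e)) ys)" for e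
    have Prp: "Pr (\<rho> *\<^sub>R e) (pp e)" and Prm: "Pr (- (\<rho> *\<^sub>R e)) (pm e)" if "e \<in> B" for e
    proof -
      have "\<rho> *\<^sub>R e \<in> W" "norm (\<rho> *\<^sub>R e) = \<rho>"
        using that BW Bnorm rho_pos subspace_scale[OF sW] by auto
      then show "Pr (\<rho> *\<^sub>R e) (pp e)" unfolding pp_def using H by (metis someI_ex)
      have "- (\<rho> *\<^sub>R e) \<in> W" "norm (- (\<rho> *\<^sub>R e)) = \<rho>"
        using that BW Bnorm rho_pos subspace_scale[OF sW] subspace_neg[OF sW] by auto
      then show "Pr (- (\<rho> *\<^sub>R e)) (pm e)" unfolding pm_def using H by (metis someI_ex)
    qed
    have ap: "norm (Q (pp e t) - \<rho> *\<^sub>R e) \<le> r" and am: "norm (Q (pm e t) + \<rho> *\<^sub>R e) \<le> r"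
      if "e \<in> B" "t \<in> {1..T}" for e t
    proof -
      have "norm (Q (pp e t) - Q (pp e T)) \<le> (\<Sum>u=1..T-1. norm (pp e u - pp e (u+1)))"
        by (rule tele_bound[OF linQ nQ that(2)])
      then show "norm (Q (pp e t) - \<rho> *\<^sub>R e) \<le> r" using Prp[OF that(1)] unfolding Pr_def by simp
      have "norm (Q (pm e t) - Q (pm e T)) \<le> (\<Sum>u=1..T-1. norm (pm e u - pm e (u+1)))"
        by (rule tele_bound[OF linQ nQ that(2)])
      then show "norm (Q (pm e t) + \<rho> *\<^sub>R e) \<le> r" using Prm[OF that(1)] unfolding Pr_def by simp
    qed
    define g where "g t e = Q (pp e t) - Q (pm e t) - (2*\<rho>) *\<^sub>R e" for t e
    define c where "c t = (1/2) *\<^sub>R (\<Sum>e\<in>B. Q (pp e t) + Q (pm e t))" for t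
    have gW: "g t e \<in> W" if "e \<in> B" for t e
      unfolding g_def using that BW by (intro subspace_diff[OF sW] subspace_scale[OF sW] QW) auto
    have cW: "c t \<in> W" for t
      unfolding c_def by (intro subspace_scale[OF sW] subspace_sum[OF sW] subspace_add[OF sW] QW)
    have gb: "norm (g t e) \<le> 2*r" if "e \<in> B" "t \<in> {1..T}" for e t
    proof -
      have "g t e = (Q (pp e t) - \<rho> *\<^sub>R e) - (Q (pm e t) + \<rho> *\<^sub>R e)"
        unfolding g_def by (simp add: algebra_simps flip: scaleR_add_left)
      then have "norm (g t e) \<le> norm (Q (pp e t) - \<rho> *\<^sub>R e) + norm (Q (pm e t) + \<rho> *\<^sub>R e)"
        by (metis norm_triangle_ineq4)
      then show ?thesis using ap[OF that] am[OF that] by simp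
    qed
    have cb: "norm (c t) \<le> N * r" if "t \<in> {1..T}" for t
    proof -
      have "(\<Sum>e\<in>B. Q (pp e t) + Q (pm e t)) = (\<Sum>e\<in>B. (Q (pp e t) - \<rho> *\<^sub>R e) + (Q (pm e t) + \<rho> *\<^sub>R e))"
        by (rule sum.cong) simp_all
      also have "norm \<dots> \<le> (\<Sum>e\<in>B. norm ((Q (pp e t) - \<rho> *\<^sub>R e) + (Q (pm e t) + \<rho> *\<^sub>R e)))"
        by (rule norm_sum)
      also have "\<dots> \<le> (\<Sum>e\<in>B. 2 * r)"
      proof (rule sum_mono)
        fix e assume e: "e \<in> B"
        show "norm ((Q (pp e t) - \<rho> *\<^sub>R e) + (Q (pm e t) + \<rho> *\<^sub>R e)) \<le> 2 * r"
          using norm_triangle_ineq[of "Q (pp e t) - \<rho> *\<^sub>R e" "Q (pm e t) + \<rho> *\<^sub>R e"]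
            ap[OF e that] am[OF e that] by simp
      qed
      also have "\<dots> = 2 * N * r" using cardB by (simp add: N_def)
      finally show ?thesis unfolding c_def by simp
    qed
    define EQ where "EQ t n \<longleftrightarrow> n \<in> W \<and> (2*\<rho>) *\<^sub>R n + (\<Sum>e\<in>B. (n \<bullet> e) *\<^sub>R g t e) + c t = 0" for t n
    define nn where "nn t = (SOME n. EQ t n)" for t
    have nnEQ: "EQ t (nn t)" if "t \<in> {1..T}" for t
    proof -
      have "\<exists>n\<in>W. (2*\<rho>) *\<^sub>R n + (\<Sum>e\<in>B. (n \<bullet> e) *\<^sub>R g t e) + c t = 0"
        by (rule fp_solve[OF sW Bfin BW Bnorm gW gb[OF _ that] cW assms(3) \<rho>_def])
           (simp_all add: cardlt)
      then have "\<exists>n. EQ t n" unfolding EQ_def by blast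
      then show ?thesis unfolding nn_def by (rule someI_ex)
    qed
    have nnW: "nn t \<in> W" and nneq: "(2*\<rho>) *\<^sub>R nn t + (\<Sum>e\<in>B. (nn t \<bullet> e) *\<^sub>R g t e) + c t = 0"
      if "t \<in> {1..T}" for t using nnEQ[OF that] unfolding EQ_def by auto
    have nnb: "\<gamma> * norm (nn t) \<le> N" if "t \<in> {1..T}" for t
    proof -
      let ?z = "norm (nn t)"
      have gbt: "\<And>e. e \<in> B \<Longrightarrow> norm (g t e) \<le> 2*r" using gb that by blast
      have "(2*\<rho>) *\<^sub>R nn t = - ((\<Sum>e\<in>B. (nn t \<bullet> e) *\<^sub>R g t e) + c t)"
        unfolding eq_neg_iff_add_eq_0 using nneq[OF that] by (simp only: add.assoc)
      then have "norm ((2*\<rho>) *\<^sub>R nn t) = norm ((\<Sum>e\<in>B. (nn t \<bullet> e) *\<^sub>R g t e) + c t)"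
        by (simp only: norm_minus_cancel)
      then have "2*\<rho> * ?z = norm ((\<Sum>e\<in>B. (nn t \<bullet> e) *\<^sub>R g t e) + c t)"
        using rho_pos by simp
      also have "\<dots> \<le> norm (\<Sum>e\<in>B. (nn t \<bullet> e) *\<^sub>R g t e) + norm (c t)" by (rule norm_triangle_ineq)
      also have "\<dots> \<le> N * ?z * (2*r) + N * r"
      proof -
        have "norm (\<Sum>e\<in>B. (nn t \<bullet> e) *\<^sub>R g t e) \<le> real (card B) * ?z * (2*r)"
          using sum_coef_bound[OF Bfin Bnorm gbt] by simp
        then show ?thesis using cb[OF that] cardBN by simp
      qed
      finally have "r * (2 * \<gamma> * ?z) \<le> r * (2 * N * ?z + N)" by (simp add: \<rho>_def algebra_simps)
      then have "2 * \<gamma> * ?z \<le> 2 * N * ?z + N" using assms(3) by simp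
      moreover have "2 * N * ?z \<le> \<gamma> * ?z" using gN Npos by (intro mult_right_mono) simp_all
      ultimately show ?thesis by linarith
    qed
    have nnb2: "norm (nn t) \<le> 1/12" and nue: "\<bar>nn t \<bullet> e\<bar> \<le> N / \<gamma>" if "t \<in> {1..T}" "e \<in> B" for t e
    proof -
      have "norm (nn t) \<le> N / \<gamma>" using nnb[OF that(1)] gpos by (simp add: field_simps)
      moreover have "N / \<gamma> \<le> 1/12" using gN gpos by (simp add: field_simps)
      moreover have "\<bar>nn t \<bullet> e\<bar> \<le> norm (nn t)"
        using Cauchy_Schwarz_ineq2[of "nn t" e] Bnorm[OF that(2)] by simp
      ultimately show "norm (nn t) \<le> 1/12" "\<bar>nn t \<bullet> e\<bar> \<le> N / \<gamma>" by linarith+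
    qed
    have Ng: "N / \<gamma> \<le> 1/12" using gN gpos by (simp add: field_simps)
    have ppK: "pp e t \<in> K t" "norm (P (pp e t)) \<le> \<gamma>' * r"
      and pmK: "pm e t \<in> K t" "norm (P (pm e t)) \<le> \<gamma>' * r" if "e \<in> B" "t \<in> {1..T}" for e t
      using Prp[OF that(1)] Prm[OF that(1)] that(2) unfolding Pr_def by auto
    have ppL: "(\<Sum>t=1..T-1. norm (pp e t - pp e (t+1))) \<le> r"
      and pmL: "(\<Sum>t=1..T-1. norm (pm e t - pm e (t+1))) \<le> r" if "e \<in> B" for e
      using Prp[OF that(1)] Prm[OF that(1)] unfolding Pr_def by auto
    define Y where "Y t = (\<Sum>e\<in>B. (1/N) *\<^sub>R ((1/2 + nn t \<bullet> e) *\<^sub>R pp e t + (1/2 - nn t \<bullet> e) *\<^sub>R pm e t))" for t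
    have YK: "Y t \<in> K t" if "t \<in> {1..T}" for t
      unfolding Y_def
    proof (rule convex_sum[OF Bfin assms(6)[OF that]])
      show "(\<Sum>e\<in>B. 1/N) = 1" using cardBN Npos by simp
      show "\<And>e. e \<in> B \<Longrightarrow> 0 \<le> 1/N" using Npos by simp
      fix e assume e: "e \<in> B"
      have "\<bar>nn t \<bullet> e\<bar> \<le> 1/12" using nue[OF that e] Ng by linarith
      then show "(1/2 + nn t \<bullet> e) *\<^sub>R pp e t + (1/2 - nn t \<bullet> e) *\<^sub>R pm e t \<in> K t"
        by (intro convexD[OF assms(6)[OF that]] ppK[OF e that] pmK[OF e that]) auto
    qed
    have YQ: "Q (Y t) = 0" if "t \<in> {1..T}" for t
    proof -
      have nnspan: "nn t \<in> span B" using nnW[OF that] Bspan by blast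
      have "Q (Y t) = (1/N) *\<^sub>R (\<Sum>e\<in>B. (1/2 + nn t \<bullet> e) *\<^sub>R Q (pp e t) + (1/2 - nn t \<bullet> e) *\<^sub>R Q (pm e t))"
        by (simp add: Y_def linear_sum[OF linQ] linear_scale[OF linQ] linear_add[OF linQ] scaleR_sum_right)
      also have "(\<Sum>e\<in>B. (1/2 + nn t \<bullet> e) *\<^sub>R Q (pp e t) + (1/2 - nn t \<bullet> e) *\<^sub>R Q (pm e t))
          = (\<Sum>e\<in>B. (1/2) *\<^sub>R (Q (pp e t) + Q (pm e t)) + ((nn t \<bullet> e) *\<^sub>R g t e + (2*\<rho>) *\<^sub>R ((nn t \<bullet> e) *\<^sub>R e)))"
        by (rule sum.cong) (simp_all add: g_def algebra_simps)
      also have "\<dots> = c t + (\<Sum>e\<in>B. (nn t \<bullet> e) *\<^sub>R g t e) + (2*\<rho>) *\<^sub>R (\<Sum>e\<in>B. (nn t \<bullet> e) *\<^sub>R e)"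
        by (simp add: sum.distrib c_def scaleR_sum_right flip: scaleR_right.sum)
      also have "(\<Sum>e\<in>B. (nn t \<bullet> e) *\<^sub>R e) = nn t"
        using onb_expand[OF Bfin Borth Bnorm nnspan] .
      also have "c t + (\<Sum>e\<in>B. (nn t \<bullet> e) *\<^sub>R g t e) + (2*\<rho>) *\<^sub>R nn t = 0"
        using nneq[OF that] by (simp add: algebra_simps)
      finally show ?thesis by simp
    qed
    have YV: "Y t \<in> V" if "t \<in> {1..T}" for t using inV[OF YQ[OF that]] .
    define D where "D t = (\<Sum>e\<in>B. norm (pp e t - pp e (t+1)) + norm (pm e t - pm e (t+1)))" for t
    have Dnn: "D t \<ge> 0" for t unfolding D_def by (intro sum_nonneg) simp
    have dn: "\<gamma> * r * norm (nn t - nn (t+1)) \<le> D t" if "t \<in> {1..T-1}" for t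
    proof -
      have t1: "t \<in> {1..T}" and t2: "t+1 \<in> {1..T}" using that by auto
      define n where "n = nn t"
      define n' where "n' = nn (t+1)"
      let ?z = "norm (n - n')"
      have e1: "(2*\<rho>) *\<^sub>R n + (\<Sum>e\<in>B. (n \<bullet> e) *\<^sub>R g t e) + c t = 0" using nneq[OF t1] by (simp add: n_def)
      have e2: "(2*\<rho>) *\<^sub>R n' + (\<Sum>e\<in>B. (n' \<bullet> e) *\<^sub>R g (t+1) e) + c (t+1) = 0" using nneq[OF t2] by (simp add: n'_def)
      have ss: "(\<Sum>e\<in>B. ((n - n') \<bullet> e) *\<^sub>R g t e) + (\<Sum>e\<in>B. (n' \<bullet> e) *\<^sub>R (g t e - g (t+1) e))
          = (\<Sum>e\<in>B. (n \<bullet> e) *\<^sub>R g t e) - (\<Sum>e\<in>B. (n' \<bullet> e) *\<^sub>R g (t+1) e)"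
        by (simp add: sum.distrib[symmetric] sum_subtractf[symmetric] inner_diff_left algebra_simps)
      have key: "(2*\<rho>) *\<^sub>R (n - n') = - ((\<Sum>e\<in>B. ((n - n') \<bullet> e) *\<^sub>R g t e) + (\<Sum>e\<in>B. (n' \<bullet> e) *\<^sub>R (g t e - g (t+1) e)) + (c t - c (t+1)))"
      proof -
        have gen: "\<And>(x::'a) y S S' C C'. (2*\<rho>) *\<^sub>R (x - y) + ((S - S') + (C - C')) = ((2*\<rho>) *\<^sub>R x + S + C) - ((2*\<rho>) *\<^sub>R y + S' + C')"
          by (simp add: algebra_simps)
        have "(2*\<rho>) *\<^sub>R (n - n') + ((\<Sum>e\<in>B. ((n - n') \<bullet> e) *\<^sub>R g t e) + (\<Sum>e\<in>B. (n' \<bullet> e) *\<^sub>R (g t e - g (t+1) e)) + (c t - c (t+1)))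
          = ((2*\<rho>) *\<^sub>R n + (\<Sum>e\<in>B. (n \<bullet> e) *\<^sub>R g t e) + c t) - ((2*\<rho>) *\<^sub>R n' + (\<Sum>e\<in>B. (n' \<bullet> e) *\<^sub>R g (t+1) e) + c (t+1))"
          unfolding ss by (rule gen)
        also have "\<dots> = 0" using e1 e2 by simp
        finally show ?thesis unfolding eq_neg_iff_add_eq_0 .
      qed
      have "2*\<rho> * ?z = norm ((\<Sum>e\<in>B. ((n - n') \<bullet> e) *\<^sub>R g t e) + (\<Sum>e\<in>B. (n' \<bullet> e) *\<^sub>R (g t e - g (t+1) e)) + (c t - c (t+1)))"
      proof -
        have "norm ((2*\<rho>) *\<^sub>R (n - n')) = 2*\<rho> * ?z" using rho_pos by simp
        then show ?thesis unfolding key norm_minus_cancel by simp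
      qed
      also have "\<dots> \<le> norm (\<Sum>e\<in>B. ((n - n') \<bullet> e) *\<^sub>R g t e) + norm (\<Sum>e\<in>B. (n' \<bullet> e) *\<^sub>R (g t e - g (t+1) e)) + norm (c t - c (t+1))"
        using norm_triangle_ineq[of "(\<Sum>e\<in>B. ((n - n') \<bullet> e) *\<^sub>R g t e) + (\<Sum>e\<in>B. (n' \<bullet> e) *\<^sub>R (g t e - g (t+1) e))" "c t - c (t+1)"]
          norm_triangle_ineq[of "(\<Sum>e\<in>B. ((n - n') \<bullet> e) *\<^sub>R g t e)" "(\<Sum>e\<in>B. (n' \<bullet> e) *\<^sub>R (g t e - g (t+1) e))"]
        by linarith
      also have "\<dots> \<le> N * ?z * (2*r) + D t / 2 + D t / 2"
      proof (intro add_mono)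
        have gbt: "\<And>e. e \<in> B \<Longrightarrow> norm (g t e) \<le> 2*r" using gb t1 by blast
        show "norm (\<Sum>e\<in>B. ((n - n') \<bullet> e) *\<^sub>R g t e) \<le> N * ?z * (2*r)"
          using sum_coef_bound[OF Bfin Bnorm gbt] cardBN by simp
        have "norm (\<Sum>e\<in>B. (n' \<bullet> e) *\<^sub>R (g t e - g (t+1) e)) \<le> (\<Sum>e\<in>B. norm ((n' \<bullet> e) *\<^sub>R (g t e - g (t+1) e)))"
          by (rule norm_sum)
        also have "\<dots> \<le> (\<Sum>e\<in>B. (1/2) * (norm (pp e t - pp e (t+1)) + norm (pm e t - pm e (t+1))))"
        proof (rule sum_mono)
          fix e assume e: "e \<in> B"
          have h1: "\<bar>n' \<bullet> e\<bar> \<le> 1/2" using nue[OF t2 e] Ng unfolding n'_def by linarith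
          have geq: "g t e - g (t+1) e = Q (pp e t - pp e (t+1)) - Q (pm e t - pm e (t+1))"
            by (simp add: g_def linear_diff[OF linQ] algebra_simps)
          have "norm (g t e - g (t+1) e) \<le> norm (pp e t - pp e (t+1)) + norm (pm e t - pm e (t+1))"
            unfolding geq using norm_triangle_ineq4[of "Q (pp e t - pp e (t+1))" "Q (pm e t - pm e (t+1))"]
              nQ[of "pp e t - pp e (t+1)"] nQ[of "pm e t - pm e (t+1)"] by linarith
          with h1 show "norm ((n' \<bullet> e) *\<^sub>R (g t e - g (t+1) e)) \<le> (1/2) * (norm (pp e t - pp e (t+1)) + norm (pm e t - pm e (t+1)))"
            unfolding norm_scaleR by (rule mult_mono) simp_all
        qed
        also have "\<dots> = (1/2) * D t" unfolding D_def by (rule sum_distrib_left[symmetric])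
        also have "\<dots> = D t / 2" by simp
        finally show "norm (\<Sum>e\<in>B. (n' \<bullet> e) *\<^sub>R (g t e - g (t+1) e)) \<le> D t / 2" .
        have "c t - c (t+1) = (1/2) *\<^sub>R (\<Sum>e\<in>B. Q (pp e t - pp e (t+1)) + Q (pm e t - pm e (t+1)))"
          by (simp add: c_def linear_diff[OF linQ] sum_subtractf[symmetric] algebra_simps flip: scaleR_diff_right)
        also have "norm \<dots> \<le> (1/2) * (\<Sum>e\<in>B. norm (Q (pp e t - pp e (t+1)) + Q (pm e t - pm e (t+1))))"
          by (simp add: norm_sum)
        also have "\<dots> \<le> (1/2) * D t" unfolding D_def
        proof (intro mult_left_mono sum_mono)
          fix e
          show "norm (Q (pp e t - pp e (t+1)) + Q (pm e t - pm e (t+1))) \<le> norm (pp e t - pp e (t+1)) + norm (pm e t - pm e (t+1))"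
            using norm_triangle_ineq[of "Q (pp e t - pp e (t+1))" "Q (pm e t - pm e (t+1))"]
              nQ[of "pp e t - pp e (t+1)"] nQ[of "pm e t - pm e (t+1)"] by linarith
        qed simp
        finally show "norm (c t - c (t+1)) \<le> D t / 2" by simp
      qed
      finally have A: "2 * (\<gamma> * r * ?z) \<le> 2 * (N * r * ?z) + D t" by (simp add: \<rho>_def algebra_simps)
      have "(2 * N) * (r * ?z) \<le> \<gamma> * (r * ?z)"
        using gN Npos assms(3) by (intro mult_right_mono) simp_all
      then have "2 * (N * r * ?z) \<le> \<gamma> * r * ?z" by (simp add: mult.assoc)
      with A show ?thesis by (simp add: n_def n'_def)
    qed
    have dY: "norm (Y t - Y (t+1)) \<le> (1/N) * (1/2 + N/\<gamma>) * D t + 2*\<gamma>'*r*norm (nn t - nn (t+1))"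
      if "t \<in> {1..T-1}" for t
    proof -
      have t1: "t \<in> {1..T}" and t2: "t+1 \<in> {1..T}" using that by auto
      let ?dn = "norm (nn t - nn (t+1))"
      define z where "z e = (1/2 + nn t \<bullet> e) *\<^sub>R (pp e t - pp e (t+1)) + (1/2 - nn t \<bullet> e) *\<^sub>R (pm e t - pm e (t+1))
          + (nn t \<bullet> e - nn (t+1) \<bullet> e) *\<^sub>R (pp e (t+1) - pm e (t+1))" for e
      have gen: "\<And>(a::real) b (x::'a) y u v. (1/N) *\<^sub>R ((1/2 + a) *\<^sub>R x + (1/2 - a) *\<^sub>R y) - (1/N) *\<^sub>R ((1/2 + b) *\<^sub>R u + (1/2 - b) *\<^sub>R v)
          = (1/N) *\<^sub>R ((1/2 + a) *\<^sub>R (x - u) + (1/2 - a) *\<^sub>R (y - v) + (a - b) *\<^sub>R (u - v))"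
        by (simp add: algebra_simps)
      have "Y t - Y (t+1) = (\<Sum>e\<in>B. (1/N) *\<^sub>R z e)"
        unfolding Y_def sum_subtractf[symmetric] by (rule sum.cong) (simp_all only: gen z_def)
      moreover have "Y t - Y (t+1) \<in> V" using subspace_diff[OF sV YV[OF t1] YV[OF t2]] .
      ultimately have "Y t - Y (t+1) = (\<Sum>e\<in>B. (1/N) *\<^sub>R P (z e))"
        using Pid[of "Y t - Y (t+1)"] by (simp add: linear_sum[OF linP] linear_scale[OF linP])
      then have "norm (Y t - Y (t+1)) \<le> (\<Sum>e\<in>B. norm ((1/N) *\<^sub>R P (z e)))"
        by (metis norm_sum)
      also have "\<dots> \<le> (\<Sum>e\<in>B. (1/N) * ((1/2 + N/\<gamma>) * (norm (pp e t - pp e (t+1)) + norm (pm e t - pm e (t+1))) + ?dn * (2*\<gamma>'*r)))"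
      proof (rule sum_mono)
        fix e assume e: "e \<in> B"
        have nu: "\<bar>nn t \<bullet> e\<bar> \<le> N/\<gamma>" using nue[OF t1 e] .
        have nu2: "N/\<gamma> \<le> 1/12" by (rule Ng)
        have Pz: "P (z e) = (1/2 + nn t \<bullet> e) *\<^sub>R P (pp e t - pp e (t+1)) + (1/2 - nn t \<bullet> e) *\<^sub>R P (pm e t - pm e (t+1))
          + (nn t \<bullet> e - nn (t+1) \<bullet> e) *\<^sub>R (P (pp e (t+1)) - P (pm e (t+1)))"
          by (simp add: z_def linear_add[OF linP] linear_scale[OF linP] linear_diff[OF linP])
        have b1: "norm ((1/2 + nn t \<bullet> e) *\<^sub>R P (pp e t - pp e (t+1))) \<le> (1/2 + N/\<gamma>) * norm (pp e t - pp e (t+1))"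
          unfolding norm_scaleR using nu nu2 nP[of "pp e t - pp e (t+1)"] by (intro mult_mono) auto
        have b2: "norm ((1/2 - nn t \<bullet> e) *\<^sub>R P (pm e t - pm e (t+1))) \<le> (1/2 + N/\<gamma>) * norm (pm e t - pm e (t+1))"
          unfolding norm_scaleR using nu nu2 nP[of "pm e t - pm e (t+1)"] by (intro mult_mono) auto
        have c1: "\<bar>nn t \<bullet> e - nn (t+1) \<bullet> e\<bar> \<le> ?dn"
          using Cauchy_Schwarz_ineq2[of "nn t - nn (t+1)" e] Bnorm[OF e] by (simp add: inner_diff_left)
        have c2: "norm (P (pp e (t+1)) - P (pm e (t+1))) \<le> 2*\<gamma>'*r"
          using norm_triangle_ineq4[of "P (pp e (t+1))" "P (pm e (t+1))"] ppK(2)[OF e t2] pmK(2)[OF e t2] by linarith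
        have b3: "norm ((nn t \<bullet> e - nn (t+1) \<bullet> e) *\<^sub>R (P (pp e (t+1)) - P (pm e (t+1)))) \<le> ?dn * (2*\<gamma>'*r)"
          unfolding norm_scaleR using c1 c2 by (intro mult_mono) auto
        have "norm (P (z e)) \<le> (1/2 + N/\<gamma>) * (norm (pp e t - pp e (t+1)) + norm (pm e t - pm e (t+1))) + ?dn * (2*\<gamma>'*r)"
          unfolding Pz using b1 b2 b3 norm_triangle_ineq[of "(1/2 + nn t \<bullet> e) *\<^sub>R P (pp e t - pp e (t+1)) + (1/2 - nn t \<bullet> e) *\<^sub>R P (pm e t - pm e (t+1))"
              "(nn t \<bullet> e - nn (t+1) \<bullet> e) *\<^sub>R (P (pp e (t+1)) - P (pm e (t+1)))"]
            norm_triangle_ineq[of "(1/2 + nn t \<bullet> e) *\<^sub>R P (pp e t - pp e (t+1))" "(1/2 - nn t \<bullet> e) *\<^sub>R P (pm e t - pm e (t+1))"]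
          by (simp add: algebra_simps)
        then show "norm ((1/N) *\<^sub>R P (z e)) \<le> (1/N) * ((1/2 + N/\<gamma>) * (norm (pp e t - pp e (t+1)) + norm (pm e t - pm e (t+1))) + ?dn * (2*\<gamma>'*r))"
          using Npos by (simp add: divide_right_mono)
      qed
      also have "\<dots> = (1/N) * (1/2 + N/\<gamma>) * D t + 2*\<gamma>'*r*?dn"
        using cardBN Npos by (simp add: D_def sum.distrib sum_distrib_left[symmetric] sum_divide_distrib[symmetric] algebra_simps)
      finally show ?thesis .
    qed
    define coef where "coef = (1/N) * (1/2 + N/\<gamma>) + 2*\<gamma>'/\<gamma>"
    have coef_nn: "coef \<ge> 0" unfolding coef_def using Npos gpos assms(4) by simp
    have dY2: "norm (Y t - Y (t+1)) \<le> coef * D t" if "t \<in> {1..T-1}" for t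
    proof -
      have "(2*\<gamma>'/\<gamma>) * (\<gamma> * r * norm (nn t - nn (t+1))) \<le> (2*\<gamma>'/\<gamma>) * D t"
        using dn[OF that] gpos assms(4) by (intro mult_left_mono) simp_all
      then have "2*\<gamma>'*r*norm (nn t - nn (t+1)) \<le> (2*\<gamma>'/\<gamma>) * D t" using gpos by simp
      then show ?thesis using dY[OF that] unfolding coef_def by (simp add: algebra_simps)
    qed
    have sumD: "(\<Sum>t=1..T-1. D t) \<le> 2 * N * r"
    proof -
      have "(\<Sum>t=1..T-1. D t) = (\<Sum>e\<in>B. (\<Sum>t=1..T-1. norm (pp e t - pp e (t+1))) + (\<Sum>t=1..T-1. norm (pm e t - pm e (t+1))))"
        unfolding D_def by (simp add: sum.distrib[symmetric] sum.swap[of _ B])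
      also have "\<dots> \<le> (\<Sum>e\<in>B. 2 * r)"
        by (rule sum_mono) (use ppL pmL in fastforce)
      also have "\<dots> = 2 * N * r" using cardBN by simp
      finally show ?thesis .
    qed
    have "(\<Sum>t=1..T-1. norm (Y t - Y (t+1))) \<le> (\<Sum>t=1..T-1. coef * D t)"
      by (rule sum_mono) (rule dY2)
    also have "\<dots> = coef * (\<Sum>t=1..T-1. D t)" by (simp add: sum_distrib_left)
    also have "\<dots> \<le> coef * (2 * N * r)" using sumD coef_nn by (rule mult_left_mono)
    also have "\<dots> = (1 + (2 + 4 * \<gamma>') / \<gamma> * real k) * r"
      unfolding coef_def N_def using Npos gpos by (simp add: N_def field_simps)
    finally have len: "(\<Sum>t=1..T-1. norm (Y t - Y (t+1))) \<le> (1 + (2 + 4 * \<gamma>') / \<gamma> * real k) * r" .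
    show ?thesis
      by (intro exI[of _ Y] conjI ballI IntI YK YV len)
  qed
qed

end
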